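(* Let $\mathcal{L}:\mathbb{R}^d\to\mathbb{R}$ be differentiable and run full-batch MoFO with hyperparameters satisfying $\beta_1<\sqrt{\beta_2}<1$ and $\epsilon=0$ (arbitrary learning rates $\eta_t>0$). Then for every $t\ge1$ and every coordinate $1\le i\le d$, $$|\theta_{i,t}-\theta_{i,t-1}|\le\frac{1}{\sqrt{1-\beta_2}\,(1-\beta_1/\sqrt{\beta_2})}\cdot\eta_t\cdot\texttt{FLT}_\alpha(m_t)_i,$$ and moreover $\|\theta_t-\theta_{t-1}\|_2\le C\eta_t$, where $C=\dfrac{\sqrt{d\cdot(\alpha\%)+B}}{\sqrt{1-\beta_2}\,(1-\beta_1/\sqrt{\beta_2})}$.
   Context: The coordinates of $\mathbb{R}^d$ are partitioned into $B$ blocks of sizes $d_1,\dots,d_B$ with $\sum_kd_k=d$. Fix $\alpha\%\in(0,1]$. For $z\in\mathbb{R}^d$, $\texttt{FLT}_\alpha(z)\in\{0,1\}^d$ equals, in each block $k$, $1$ exactly on a set of $\lceil d_k\cdot\alpha\%\rceil$ indices with the largest absolute values of $z$ within that block (ties broken in favour of smaller indices), and $0$ elsewhere. Full-batch MoFO with $\beta_1,\beta_2\in(0,1)$, learning rates $\eta_t>0$, initial point $\theta_0$: $m_0=v_0=0$; for $t\ge1$, $g_t=\nabla\mathcal{L}(\theta_{t-1})$, $m_t=\beta_1m_{t-1}+(1-\beta_1)g_t$, $v_t=\beta_2v_{t-1}+(1-\beta_2)g_t\odot g_t$, $\hat m_t=m_t/(1-\beta_1^t)$, $\hat v_t=v_t/(1-\beta_2^t)$,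 $\theta_t=\theta_{t-1}-\eta_t(\hat m_t\odot\texttt{FLT}_\alpha(m_t))/\sqrt{\hat v_t}$ entrywise ($\epsilon=0$ means no additive constant in the denominator; a quotient with $\hat v_{i,t}=0$, where necessarily $\hat m_{i,t}=0$, is taken as $0$). Subscript $i,t$ denotes the $i$-th coordinate of the vector at iteration $t$. *)

theory Defs
  imports "HOL-Analysis.Analysis"
begin

text \<open>Coordinates of R^d are the elements of a finite linearly ordered index type 'n
  (d = CARD('n)); the order is used for tie-breaking.  The block partition is given by
  a block-label function blk :: 'n => nat with labels < B; block k = {j. blk j = k}.\<close>

definition grad :: "(real^'n \<Rightarrow> real) \<Rightarrow> real^'n \<Rightarrow> real^'n" where
  "grad L x = (\<chi> i. frechet_derivative L (at x) (axis i 1))"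

definition FLT :: "real \<Rightarrow> ('n::{finite,linorder} \<Rightarrow> nat) \<Rightarrow> real^('n::{finite,linorder}) \<Rightarrow> real^('n::{finite,linorder})" where
  "FLT alpha blk z = (\<chi> i.
     if card {j. blk j = blk i \<and> (\<bar>z$j\<bar> > \<bar>z$i\<bar> \<or> (\<bar>z$j\<bar> = \<bar>z$i\<bar> \<and> j < i))}
          < nat \<lceil>real (card {j. blk j = blk i}) * alpha\<rceil>
     then 1 else 0)"

text \<open>Full-batch MoFO state (theta_t, m_t, v_t).  Division by zero is 0 in Isabelle,
  matching the convention for coordinates with hat v = 0.\<close>
fun mofo :: "(real^('n::{finite,linorder}) \<Rightarrow> real) \<Rightarrow> real \<Rightarrow> real \<Rightarrow> (nat \<Rightarrow> real) \<Rightarrow> real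
      \<Rightarrow> ('n::{finite,linorder} \<Rightarrow> nat) \<Rightarrow> real^('n::{finite,linorder}) \<Rightarrow> nat \<Rightarrow> (real^('n::{finite,linorder})) \<times> (real^('n::{finite,linorder})) \<times> (real^('n::{finite,linorder}))" where
  "mofo L b1 b2 eta alpha blk th0 0 = (th0, 0, 0)"
| "mofo L b1 b2 eta alpha blk th0 (Suc t) =
     (let (th, m, v) = mofo L b1 b2 eta alpha blk th0 t;
          g = grad L th;
          m' = b1 *\<^sub>R m + (1 - b1) *\<^sub>R g;
          v' = (\<chi> i. b2 * v$i + (1 - b2) * (g$i * g$i));
          mh = (\<chi> i. m'$i / (1 - b1 ^ Suc t));
          vh = (\<chi> i. v'$i / (1 - b2 ^ Suc t));
          msk = FLT alpha blk m';
          th' = (\<chi> i. th$i - eta (Suc t) * (mh$i * msk$i) / sqrt (vh$i))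
      in (th', m', v'))"

definition theta where "theta L b1 b2 eta alpha blk th0 t = fst (mofo L b1 b2 eta alpha blk th0 t)"
definition mom where "mom L b1 b2 eta alpha blk th0 t = fst (snd (mofo L b1 b2 eta alpha blk th0 t))"

end

theory Submission
  imports Defs
begin


lemma key:
  fixes g :: "nat \<Rightarrow> real"
  assumes b1: "0<b1" "b1<sqrt b2" and b2: "0<b2" "b2<1" and t: "t\<ge>1"
  shows "\<bar>((1-b1)*(\<Sum>k<t. b1^k*g k)/(1-b1^t)) / sqrt((1-b2)*(\<Sum>k<t. b2^k*(g k * g k))/(1-b2^t))\<bar>
     \<le> 1/(sqrt(1-b2)*(1-b1/sqrt b2))"
proof -
  define r where "r = b1 / sqrt b2"
  define S where "S = sqrt (\<Sum>k<t. b2^k*(g k * g k))"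
  have sb2: "0 < sqrt b2" "sqrt b2 < 1" using b2 by auto
  have r: "0 < r" "r < 1" using b1 sb2 by (auto simp: r_def field_simps)
  have b1l: "b1 < 1" using b1 sb2 by linarith
  have S0: "S \<ge> 0" unfolding S_def using b2 by (auto intro!: sum_nonneg)
  have each: "\<bar>b1^k * g k\<bar> \<le> r^k * S" if "k < t" for k
  proof -
    have "b1^k = r^k * sqrt b2 ^ k" using sb2 by (simp add: r_def power_divide)
    hence "\<bar>b1^k * g k\<bar> = r^k * sqrt (b2^k * (g k * g k))"
      using r b2 by (simp add: abs_mult real_sqrt_mult real_sqrt_power)
    also have "sqrt (b2^k * (g k * g k)) \<le> S" unfolding S_def
      by (rule real_sqrt_le_mono, rule member_le_sum) (use that b2 in auto)
    hence "r^k * sqrt (b2^k * (g k * g k)) \<le> r^k * S" using r by (simp add: mult_left_mono)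
    finally show ?thesis .
  qed
  have "\<bar>\<Sum>k<t. b1^k*g k\<bar> \<le> (\<Sum>k<t. \<bar>b1^k*g k\<bar>)" by (rule sum_abs)
  also have "\<dots> \<le> (\<Sum>k<t. r^k * S)" by (rule sum_mono) (use each in auto)
  also have "\<dots> = S * (\<Sum>k<t. r^k)" by (simp add: sum_distrib_left mult.commute)
  also have "\<dots> \<le> S * (1/(1-r))"
    using geometric_sum_less[of r "{..<t}"] r S0 by (intro mult_left_mono) auto
  finally have M: "\<bar>\<Sum>k<t. b1^k*g k\<bar> \<le> S / (1-r)" by simp
  have p1: "b1^t \<le> b1" using power_decreasing[of 1 t b1] t b1 b1l by simp
  have p1': "b1^t < 1" using p1 b1l by linarith
  have p2: "0 < b2^t" "b2^t < 1" using t b2 by (auto simp: power_less_one_iff)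
  have C: "0 < sqrt(1-b2)*(1-r)" using b2 r by auto
  show ?thesis
  proof (cases "S = 0")
    case True
    hence "(\<Sum>k<t. b2^k*(g k * g k)) = 0" unfolding S_def by simp
    thus ?thesis using C r_def by simp
  next
    case False
    hence Sp: "S > 0" using S0 by simp
    have den: "sqrt((1-b2)*(\<Sum>k<t. b2^k*(g k * g k))/(1-b2^t)) = sqrt(1-b2) * S / sqrt(1-b2^t)"
      unfolding S_def by (simp add: real_sqrt_mult real_sqrt_divide)
    have "\<bar>((1-b1)*(\<Sum>k<t. b1^k*g k)/(1-b1^t)) / sqrt((1-b2)*(\<Sum>k<t. b2^k*(g k * g k))/(1-b2^t))\<bar>
        = ((1-b1)/(1-b1^t)) * sqrt(1-b2^t) * \<bar>\<Sum>k<t. b1^k*g k\<bar> / (sqrt(1-b2) * S)"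
      unfolding den using b1l p1' p2 Sp b2 by (simp add: abs_mult abs_divide)
    also have "\<dots> \<le> 1 * 1 * (S/(1-r)) / (sqrt(1-b2) * S)"
      using b1l p1' p2 Sp b2 M p1
      by (intro divide_right_mono mult_mono) (auto simp: divide_le_eq_1)
    also have "\<dots> = 1/(sqrt(1-b2)*(1-b1/sqrt b2))" using Sp unfolding r_def by simp
    finally show ?thesis .
  qed
qed


lemma rank_inj:
  fixes z :: "real^'n::{finite,linorder}" and blk :: "'n \<Rightarrow> nat"
  defines "rk \<equiv> \<lambda>i. card {j. blk j = blk i \<and> (\<bar>z$j\<bar> > \<bar>z$i\<bar> \<or> (\<bar>z$j\<bar> = \<bar>z$i\<bar> \<and> j < i))}"
  shows "inj_on rk {i. blk i = k}"
proof (rule inj_onI, rule ccontr)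
  fix i j assume i: "i \<in> {i. blk i = k}" and j: "j \<in> {i. blk i = k}" and eq: "rk i = rk j" and ne: "i \<noteq> j"
  define bt where "bt = (\<lambda>a b. blk a = blk b \<and> (\<bar>z$a\<bar> > \<bar>z$b\<bar> \<or> (\<bar>z$a\<bar> = \<bar>z$b\<bar> \<and> a < b)))"
  have rk: "rk x = card {y. bt y x}" for x unfolding rk_def bt_def by simp
  have lt: "rk a < rk b" if "bt a b" for a b
  proof -
    have "{y. bt y a} \<subset> {y. bt y b}"
    proof
      show "{y. bt y a} \<subseteq> {y. bt y b}" using that unfolding bt_def by auto
      show "{y. bt y a} \<noteq> {y. bt y b}" using that unfolding bt_def by auto
    qed
    thus ?thesis unfolding rk by (intro psubset_card_mono) auto
  qed
  have "bt i j \<or> bt j i" using i j ne unfolding bt_def by (auto simp: neq_iff)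
  thus False using lt eq by fastforce
qed

lemma FLT_01: "FLT alpha blk z $ i = 0 \<or> FLT alpha blk z $ i = 1"
  unfolding FLT_def by simp

lemma FLT_count:
  fixes z :: "real^'n::{finite,linorder}" and blk :: "'n \<Rightarrow> nat"
  assumes B: "\<And>j. blk j < B" and a: "0 < alpha"
  shows "(\<Sum>i\<in>UNIV. FLT alpha blk z $ i) \<le> real CARD('n) * alpha + real B"
proof -
  define rk where "rk \<equiv> \<lambda>i. card {j. blk j = blk i \<and> (\<bar>z$j\<bar> > \<bar>z$i\<bar> \<or> (\<bar>z$j\<bar> = \<bar>z$i\<bar> \<and> j < i))}"
  define N where "N k = nat \<lceil>real (card {j. blk j = k}) * alpha\<rceil>" for k
  have F: "FLT alpha blk z $ i = (if rk i < N (blk i) then 1 else 0)" for i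
    unfolding FLT_def rk_def N_def by simp
  have rB: "range blk \<subseteq> {..<B}" using B by auto
  have grp: "(\<Sum>i\<in>UNIV. FLT alpha blk z $ i) = (\<Sum>k<B. \<Sum>i\<in>{i. blk i = k}. FLT alpha blk z $ i)"
    using sum.group[of UNIV "{..<B}" blk "\<lambda>i. FLT alpha blk z $ i"] rB by simp
  have blockb: "(\<Sum>i\<in>{i. blk i = k}. FLT alpha blk z $ i) \<le> real (card {j. blk j = k}) * alpha + 1" for k
  proof -
    have "(\<Sum>i\<in>{i. blk i = k}. FLT alpha blk z $ i) = (\<Sum>i\<in>{i. blk i = k \<and> rk i < N k}. 1)"
      unfolding F by (rule sum.mono_neutral_cong_right) auto
    also have "\<dots> = real (card {i. blk i = k \<and> rk i < N k})" by simp
    also have "card {i. blk i = k \<and> rk i < N k} \<le> card {..<N k}"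
    proof (rule card_inj_on_le)
      show "inj_on rk {i. blk i = k \<and> rk i < N k}"
        using rank_inj[of blk z k] unfolding rk_def by (rule inj_on_subset) auto
    qed auto
    hence "real (card {i. blk i = k \<and> rk i < N k}) \<le> real (N k)" by simp
    also have "real (N k) \<le> real (card {j. blk j = k}) * alpha + 1"
      unfolding N_def using a by (simp add: of_nat_nat ceiling_le_iff)
    finally show ?thesis .
  qed
  have "(\<Sum>i\<in>UNIV. FLT alpha blk z $ i) \<le> (\<Sum>k<B. real (card {j. blk j = k}) * alpha + 1)"
    unfolding grp by (rule sum_mono) (rule blockb)
  also have "\<dots> = (\<Sum>k<B. real (card {j. blk j = k})) * alpha + real B"
    by (simp add: sum.distrib sum_distrib_right)
  also have "(\<Sum>k<B. real (card {j. blk j = k})) = real CARD('n)"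
  proof -
    have "(\<Sum>k<B. \<Sum>i\<in>{i. blk i = k}. (1::real)) = (\<Sum>i\<in>(UNIV::'n set). 1)"
      using sum.group[of "UNIV::'n set" "{..<B}" blk "\<lambda>i. (1::real)"] rB by simp
    thus ?thesis by simp
  qed
  finally show ?thesis .
qed


lemma closed:
  "fst (snd (mofo L b1 b2 eta alpha blk th0 t)) $ i
     = (1-b1) * (\<Sum>k<t. b1^k * grad L (theta L b1 b2 eta alpha blk th0 (t-1-k)) $ i)
   \<and> snd (snd (mofo L b1 b2 eta alpha blk th0 t)) $ i
     = (1-b2) * (\<Sum>k<t. b2^k * (grad L (theta L b1 b2 eta alpha blk th0 (t-1-k)) $ i
                                 * grad L (theta L b1 b2 eta alpha blk th0 (t-1-k)) $ i))"
proof (induction t arbitrary: i)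
  case 0
  then show ?case by simp
next
  case (Suc t)
  obtain th m v where e: "mofo L b1 b2 eta alpha blk th0 t = (th, m, v)" by (cases "mofo L b1 b2 eta alpha blk th0 t") auto
  have th: "theta L b1 b2 eta alpha blk th0 t = th" unfolding theta_def e by simp
  let ?G = "\<lambda>s. grad L (theta L b1 b2 eta alpha blk th0 s)"
  have IH: "m $ i = (1-b1) * (\<Sum>k<t. b1^k * ?G (t-1-k) $ i)"
           "v $ i = (1-b2) * (\<Sum>k<t. b2^k * (?G (t-1-k) $ i * ?G (t-1-k) $ i))"
    using Suc.IH[of i] e by auto
  have s1: "(\<Sum>k<Suc t. b1^k * ?G (Suc t-1-k) $ i) = ?G t $ i + b1 * (\<Sum>k<t. b1^k * ?G (t-1-k) $ i)"
    unfolding sum.lessThan_Suc_shift by (simp add: sum_distrib_left mult.assoc)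
  have s2: "(\<Sum>k<Suc t. b2^k * (?G (Suc t-1-k) $ i * ?G (Suc t-1-k) $ i))
      = ?G t $ i * ?G t $ i + b2 * (\<Sum>k<t. b2^k * (?G (t-1-k) $ i * ?G (t-1-k) $ i))"
    unfolding sum.lessThan_Suc_shift by (simp add: sum_distrib_left mult.assoc)
  have f1: "fst (snd (mofo L b1 b2 eta alpha blk th0 (Suc t))) $ i = b1 * m $ i + (1-b1) * ?G t $ i"
    using th by (simp add: e Let_def)
  have f2: "snd (snd (mofo L b1 b2 eta alpha blk th0 (Suc t))) $ i = b2 * v $ i + (1-b2) * (?G t $ i * ?G t $ i)"
    using th by (simp add: e Let_def)
  show ?case unfolding s1 s2 f1 f2 IH by (simp add: algebra_simps)
qed

lemma step:
  "theta L b1 b2 eta alpha blk th0 (Suc t) $ i - theta L b1 b2 eta alpha blk th0 t $ i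
   = - (eta (Suc t) * ((mom L b1 b2 eta alpha blk th0 (Suc t) $ i / (1 - b1 ^ Suc t))
         * FLT alpha blk (mom L b1 b2 eta alpha blk th0 (Suc t)) $ i)
       / sqrt (snd (snd (mofo L b1 b2 eta alpha blk th0 (Suc t))) $ i / (1 - b2 ^ Suc t)))"
proof -
  obtain th m v where e: "mofo L b1 b2 eta alpha blk th0 t = (th, m, v)" by (cases "mofo L b1 b2 eta alpha blk th0 t") auto
  show ?thesis by (simp add: theta_def mom_def e Let_def)
qed



theorem lemma2:
  fixes L :: "real^('n::{finite,linorder}) \<Rightarrow> real"
    and b1 b2 alpha :: real and eta :: "nat \<Rightarrow> real"
    and blk :: "'n \<Rightarrow> nat" and B :: nat and th0 :: "real^('n::{finite,linorder})"
  assumes "\<And>x. L differentiable (at x)"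
    and "0 < b1" and "b1 < sqrt b2" and "0 < b2" and "b2 < 1"
    and "\<And>t. eta t > 0"
    and "0 < alpha" and "alpha \<le> 1"
    and "\<And>j. blk j < B"
  shows "\<forall>t\<ge>1. (\<forall>i. \<bar>theta L b1 b2 eta alpha blk th0 t $ i - theta L b1 b2 eta alpha blk th0 (t - 1) $ i\<bar>
              \<le> 1 / (sqrt (1 - b2) * (1 - b1 / sqrt b2)) * eta t
                 * FLT alpha blk (mom L b1 b2 eta alpha blk th0 t) $ i)
          \<and> norm (theta L b1 b2 eta alpha blk th0 t - theta L b1 b2 eta alpha blk th0 (t - 1))
              \<le> sqrt (real CARD('n) * alpha + real B) / (sqrt (1 - b2) * (1 - b1 / sqrt b2)) * eta t"
proof (intro allI impI)
  fix t :: nat assume t: "t \<ge> 1"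
  then obtain s where ts: "t = Suc s" by (cases t) auto
  define C where "C = 1 / (sqrt (1 - b2) * (1 - b1 / sqrt b2))"
  define f where "f = FLT alpha blk (mom L b1 b2 eta alpha blk th0 t)"
  define D where "D = theta L b1 b2 eta alpha blk th0 t - theta L b1 b2 eta alpha blk th0 (t - 1)"
  have sb2: "sqrt b2 < 1" "0 < sqrt b2" using assms by auto
  have Cp: "C > 0" unfolding C_def using assms sb2 by (auto simp: field_simps)
  have et: "eta t > 0" using assms by simp
  have coord: "\<bar>D $ i\<bar> \<le> C * eta t * f $ i" for i
  proof -
    let ?G = "\<lambda>k. grad L (theta L b1 b2 eta alpha blk th0 (s-k)) $ i"
    let ?x = "mom L b1 b2 eta alpha blk th0 t $ i / (1 - b1 ^ t)"
    let ?y = "snd (snd (mofo L b1 b2 eta alpha blk th0 t)) $ i / (1 - b2 ^ t)"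
    have cl: "mom L b1 b2 eta alpha blk th0 t $ i = (1-b1) * (\<Sum>k<t. b1^k * ?G k)"
             "snd (snd (mofo L b1 b2 eta alpha blk th0 t)) $ i = (1-b2) * (\<Sum>k<t. b2^k * (?G k * ?G k))"
      using closed[of L b1 b2 eta alpha blk th0 t i] unfolding mom_def ts by auto
    have K: "\<bar>?x / sqrt ?y\<bar> \<le> C"
      unfolding cl C_def using key[of b1 b2 t ?G] assms t by simp
    have "D $ i = - (eta t * (?x * f $ i) / sqrt ?y)"
      unfolding D_def f_def ts using step[of L b1 b2 eta alpha blk th0 s i] by simp
    moreover have "f $ i = 0 \<or> f $ i = 1" unfolding f_def by (rule FLT_01)
    ultimately have "\<bar>D $ i\<bar> = eta t * f $ i * \<bar>?x / sqrt ?y\<bar>"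
      using et by (auto simp: abs_mult abs_divide)
    also have "\<dots> \<le> eta t * f $ i * C"
    proof -
      have "f $ i \<ge> 0" using FLT_01[of alpha blk "mom L b1 b2 eta alpha blk th0 t" i] unfolding f_def by auto
      thus ?thesis using K et by (intro mult_left_mono) auto
    qed
    finally show ?thesis by (simp add: mult_ac)
  qed
  have "norm D = L2_set (\<lambda>i. norm (D $ i)) UNIV" by (simp add: norm_vec_def)
  also have "\<dots> \<le> L2_set (\<lambda>i. C * eta t * f $ i) UNIV"
    by (rule L2_set_mono) (use coord in auto)
  also have "\<dots> = sqrt (\<Sum>i\<in>UNIV. (C * eta t)^2 * f $ i)"
  proof -
    have "(C * eta t * f $ i)^2 = (C * eta t)^2 * f $ i" for i
      using FLT_01[of alpha blk _ i] unfolding f_def power2_eq_square by auto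
    thus ?thesis unfolding L2_set_def by simp
  qed
  also have "\<dots> = C * eta t * sqrt (\<Sum>i\<in>UNIV. f $ i)"
    using Cp et by (simp add: sum_distrib_left[symmetric] real_sqrt_mult)
  also have "\<dots> \<le> C * eta t * sqrt (real CARD('n) * alpha + real B)"
    using FLT_count[of blk B alpha] assms less_imp_le[OF mult_pos_pos[OF Cp et]] unfolding f_def
    by (intro mult_left_mono real_sqrt_le_mono) auto
  finally have "norm D \<le> C * eta t * sqrt (real CARD('n) * alpha + real B)" .
  moreover have "\<forall>i. \<bar>D $ i\<bar> \<le> C * eta t * f $ i" using coord by blast
  ultimately show "(\<forall>i. \<bar>theta L b1 b2 eta alpha blk th0 t $ i - theta L b1 b2 eta alpha blk th0 (t - 1) $ i\<bar>
              \<le> 1 / (sqrt (1 - b2) * (1 - b1 / sqrt b2)) * eta t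
                 * FLT alpha blk (mom L b1 b2 eta alpha blk th0 t) $ i)
          \<and> norm (theta L b1 b2 eta alpha blk th0 t - theta L b1 b2 eta alpha blk th0 (t - 1))
              \<le> sqrt (real CARD('n) * alpha + real B) / (sqrt (1 - b2) * (1 - b1 / sqrt b2)) * eta t"
    unfolding D_def C_def f_def by (simp add: mult_ac)
qed

end
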